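(* For each $n=1,\ldots,N$ let $\mathbf{A}^{(n)}\in\mathbb{R}^{I_n\times R}$ be a random matrix with rows $\mathbf{a}^{(n)}_{i_n}\in\mathbb{R}^R$ (as column vectors), all entries having finite second moments. Assume the matrices $\mathbf{A}^{(1)},\ldots,\mathbf{A}^{(N)}$ are independent and that, for all $n$ and all $i_n$, the row vectors $\{\mathbf{a}^{(n)}_{i_n}\}$ are independent. Then $$\mathbb{E}\left[ \left\| [\![ \mathbf{A}^{(1)},\ldots, \mathbf{A}^{(N)} ]\!]\right\|_F^2 \right] = \sum_{i_1=1}^{I_1}\cdots\sum_{i_N=1}^{I_N} \left\langle \mathbb{E}\left[\mathbf{a}_{i_1}^{(1)}\mathbf{a}_{i_1}^{(1)T}\right],\ldots,\mathbb{E}\left[\mathbf{a}_{i_N}^{(N)}\mathbf{a}_{i_N}^{(N)T} \right]\right\rangle.$$ Moreover, letting $\mathbf{B}^{(n)}\in\mathbb{R}^{I_n\times R^2}$ be the matrix whose $i_n$th row is $\mathrm{vec}\left(\mathbb{E}\left[\mathbf{a}_{i_n}^{(n)}\mathbf{a}_{i_n}^{(n)T}\right]\right)^T$, we have $$\mathbb{E}\left[ \left\| [\![ \mathbf{A}^{(1)},\ldots, \mathbf{A}^{(N)} ]\!]\right\|_F^2 \right]=\mathbf{1}_{\prod_n I_n}^T \left(\bigodot_n \mathbf{B}^{(n)} \right)\mathbf{1}_{R^2},$$ where $\mathbf{1}_m$ denotes the all-ones vector of length $m$.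
   Context: The Kruskal operator $[\![ \mathbf{A}^{(1)},\ldots, \mathbf{A}^{(N)} ]\!]$ denotes the tensor $\sum_{r=1}^R \mathbf{a}^{(1)}_{\cdot r}\circ\cdots\circ\mathbf{a}^{(N)}_{\cdot r}\in\mathbb{R}^{I_1\times\cdots\times I_N}$, where $\mathbf{a}^{(n)}_{\cdot r}$ is the $r$th column of $\mathbf{A}^{(n)}$ and $\circ$ is the outer product; its $(i_1,\ldots,i_N)$ entry is $\sum_r\prod_n a^{(n)}_{i_n r}$. $\|\cdot\|_F$ is the Frobenius norm (square root of the sum of squares of all entries). The generalized inner product of $N$ matrices of the same size is $\langle\mathbf{M}^{(1)},\ldots,\mathbf{M}^{(N)}\rangle=\sum_{i,j}\prod_n M^{(n)}_{ij}$. $\mathrm{vec}$ stacks the columns of a matrix into a vector. For matrices with the same number of columns, $\mathbf{A}\odot\mathbf{B}$ is the Khatri–Rao (columnwise Kronecker) product and $\bigodot_n \mathbf{B}^{(n)} = \mathbf{B}^{(N)}\odot\cdots\odot\mathbf{B}^{(1)}$, of size $\prod_n I_n\times R^2$. *)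

theory Defs
  imports "HOL-Probability.Probability"
begin

text \<open>Matrices are represented as functions of (0-based) row and column indices.
  A family of factor matrices is U :: nat => nat => nat => real, with U n i r the
  (i,r) entry of the n-th factor matrix (size I n x R).\<close>

definition kruskal :: "nat \<Rightarrow> nat \<Rightarrow> (nat \<Rightarrow> nat \<Rightarrow> nat \<Rightarrow> real) \<Rightarrow> (nat \<Rightarrow> nat) \<Rightarrow> real" where
  "kruskal N R U idx = (\<Sum>r<R. \<Prod>n<N. U n (idx n) r)"

definition tensor_idx :: "nat \<Rightarrow> (nat \<Rightarrow> nat) \<Rightarrow> (nat \<Rightarrow> nat) set" where
  "tensor_idx N I = PiE {..<N} (\<lambda>n. {..<I n})"

definition frob_sq :: "nat \<Rightarrow> (nat \<Rightarrow> nat) \<Rightarrow> ((nat \<Rightarrow> nat) \<Rightarrow> real) \<Rightarrow> real" where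
  "frob_sq N I T = (\<Sum>idx\<in>tensor_idx N I. (T idx)^2)"

definition gen_inner :: "nat \<Rightarrow> nat \<Rightarrow> (nat \<Rightarrow> nat \<Rightarrow> nat \<Rightarrow> real) \<Rightarrow> real" where
  "gen_inner N R Ms = (\<Sum>i<R. \<Sum>j<R. \<Prod>n<N. Ms n i j)"

definition vec_mat :: "nat \<Rightarrow> (nat \<Rightarrow> nat \<Rightarrow> real) \<Rightarrow> nat \<Rightarrow> real" where
  "vec_mat m M k = M (k mod m) (k div m)"

text \<open>Khatri-Rao product A \<odot> B, where B has J rows: row i*J+j of the result is the
  elementwise product of row i of A and row j of B.\<close>
definition khatri_rao :: "nat \<Rightarrow> (nat \<Rightarrow> nat \<Rightarrow> real) \<Rightarrow> (nat \<Rightarrow> nat \<Rightarrow> real) \<Rightarrow> nat \<Rightarrow> nat \<Rightarrow> real" where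
  "khatri_rao J A B = (\<lambda>row k. A (row div J) k * B (row mod J) k)"

text \<open>kr_prod I B n = B (n-1) \<odot> ... \<odot> B 0 (B m has I m rows); kr_prod I B 0 is the
  1-row all-ones matrix (neutral element of the Khatri-Rao product).\<close>
fun kr_prod :: "(nat \<Rightarrow> nat) \<Rightarrow> (nat \<Rightarrow> nat \<Rightarrow> nat \<Rightarrow> real) \<Rightarrow> nat \<Rightarrow> nat \<Rightarrow> nat \<Rightarrow> real" where
  "kr_prod I B 0 = (\<lambda>_ _. 1)"
| "kr_prod I B (Suc n) = khatri_rao (\<Prod>m<n. I m) (B n) (kr_prod I B n)"

definition ones_form :: "nat \<Rightarrow> nat \<Rightarrow> (nat \<Rightarrow> nat \<Rightarrow> real) \<Rightarrow> real" where
  "ones_form p q M = (\<Sum>i<p. \<Sum>k<q. M i k)"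

end

theory Submission
  imports Defs
begin

lemma divmod_sum:
  fixes g :: "nat \<Rightarrow> nat \<Rightarrow> real"
  shows "(\<Sum>t<a*b. g (t div b) (t mod b)) = (\<Sum>i<a. \<Sum>j<b. g i j)"
proof (induction a)
  case 0 then show ?case by simp
next
  case (Suc a)
  have "(\<Sum>t<Suc a*b. g (t div b) (t mod b)) =
        (\<Sum>t<a*b. g (t div b) (t mod b)) + (\<Sum>t\<in>{a*b..<a*b+b}. g (t div b) (t mod b))"
    by (simp add: lessThan_atLeast0 sum.atLeastLessThan_concat add.commute)
  also have "(\<Sum>t\<in>{a*b..<a*b+b}. g (t div b) (t mod b)) = (\<Sum>j\<in>{0..<b}. g ((j+a*b) div b) ((j+a*b) mod b))"
    using sum.shift_bounds_nat_ivl[of "\<lambda>t. g (t div b) (t mod b)" 0 "a*b" b] by (simp add: add.commute)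
  also have "\<dots> = (\<Sum>j<b. g a j)"
    by (auto simp: lessThan_atLeast0 intro!: sum.cong)
  finally show ?case using Suc by simp
qed

lemma kr_sum:
  "(\<Sum>t<(\<Prod>m<n. I m). kr_prod I B n t k) = (\<Prod>m<n. \<Sum>i<I m. B m i k)"
proof (induction n)
  case 0 then show ?case by simp
next
  case (Suc n)
  have "(\<Sum>t<(\<Prod>m<Suc n. I m). kr_prod I B (Suc n) t k)
      = (\<Sum>t<I n * (\<Prod>m<n. I m). B n (t div (\<Prod>m<n. I m)) k * kr_prod I B n (t mod (\<Prod>m<n. I m)) k)"
    by (simp add: khatri_rao_def mult.commute)
  also have "\<dots> = (\<Sum>i<I n. \<Sum>j<(\<Prod>m<n. I m). B n i k * kr_prod I B n j k)"
    by (rule divmod_sum)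
  also have "\<dots> = (\<Sum>i<I n. B n i k) * (\<Sum>j<(\<Prod>m<n. I m). kr_prod I B n j k)"
    by (rule sum_product[symmetric])
  finally show ?case using Suc by (simp add: mult.commute)
qed

lemma abs_prod_le: "\<bar>(a::real) * b\<bar> \<le> a^2 + b^2"
proof -
  have "0 \<le> (\<bar>a\<bar> - \<bar>b\<bar>)^2" by simp
  then have "2 * \<bar>a\<bar> * \<bar>b\<bar> \<le> a^2 + b^2" by (simp add: power2_eq_square algebra_simps)
  moreover have "0 \<le> \<bar>a\<bar> * \<bar>b\<bar>" by simp
  ultimately show ?thesis unfolding abs_mult by linarith
qed

theorem theorem3:
  fixes M :: "'a measure" and N R :: nat and I :: "nat \<Rightarrow> nat"
    and A :: "nat \<Rightarrow> nat \<Rightarrow> nat \<Rightarrow> 'a \<Rightarrow> real"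
  assumes P: "prob_space M"
    and meas: "\<And>n i r. n < N \<Longrightarrow> i < I n \<Longrightarrow> r < R \<Longrightarrow> A n i r \<in> borel_measurable M"
    and sq: "\<And>n i r. n < N \<Longrightarrow> i < I n \<Longrightarrow> r < R \<Longrightarrow> integrable M (\<lambda>\<omega>. (A n i r \<omega>)^2)"
    and indep_mats: "prob_space.indep_vars M
        (\<lambda>n. PiM ({..<I n} \<times> {..<R}) (\<lambda>_. borel))
        (\<lambda>n \<omega>. \<lambda>(i, r)\<in>{..<I n} \<times> {..<R}. A n i r \<omega>) {..<N}"
    and indep_rows: "\<And>n. n < N \<Longrightarrow> prob_space.indep_vars M
        (\<lambda>_. PiM {..<R} (\<lambda>_. borel))
        (\<lambda>i \<omega>. \<lambda>r\<in>{..<R}. A n i r \<omega>) {..<I n}"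
  shows "(\<integral>\<omega>. frob_sq N I (kruskal N R (\<lambda>n i r. A n i r \<omega>)) \<partial>M)
           = (\<Sum>idx\<in>tensor_idx N I.
                gen_inner N R (\<lambda>n r s. \<integral>\<omega>. A n (idx n) r \<omega> * A n (idx n) s \<omega> \<partial>M))
       \<and> (\<integral>\<omega>. frob_sq N I (kruskal N R (\<lambda>n i r. A n i r \<omega>)) \<partial>M)
           = ones_form (\<Prod>n<N. I n) (R^2)
               (kr_prod I (\<lambda>n i. vec_mat R (\<lambda>r s. \<integral>\<omega>. A n i r \<omega> * A n i s \<omega> \<partial>M)) N)"
proof -
  interpret prob_space M by (rule P)
  define G where "G n i r s = (\<integral>\<omega>. A n i r \<omega> * A n i s \<omega> \<partial>M)" for n i r s
  have int2: "integrable M (\<lambda>\<omega>. A n i r \<omega> * A n i s \<omega>)"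
    if "n < N" "i < I n" "r < R" "s < R" for n i r s
  proof (rule Bochner_Integration.integrable_bound)
    show "integrable M (\<lambda>\<omega>. (A n i r \<omega>)^2 + (A n i s \<omega>)^2)"
      using sq that by auto
    show "(\<lambda>\<omega>. A n i r \<omega> * A n i s \<omega>) \<in> borel_measurable M"
      using meas that by auto
    show "AE \<omega> in M. norm (A n i r \<omega> * A n i s \<omega>) \<le> norm ((A n i r \<omega>)^2 + (A n i s \<omega>)^2)"
      using abs_prod_le by auto
  qed
  have key: "integrable M (\<lambda>\<omega>. \<Prod>n<N. A n (idx n) r \<omega> * A n (idx n) s \<omega>) \<and>
      (\<integral>\<omega>. (\<Prod>n<N. A n (idx n) r \<omega> * A n (idx n) s \<omega>) \<partial>M) = (\<Prod>n<N. G n (idx n) r s)"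
    if idx: "idx \<in> tensor_idx N I" and rs: "r < R" "s < R" for idx r s
  proof -
    have idxn: "idx n < I n" if "n < N" for n
      using idx that by (auto simp: tensor_idx_def PiE_def Pi_def)
    have "indep_vars (\<lambda>_. borel) (\<lambda>n x. (\<lambda>f. f (idx n, r) * f (idx n, s))
        ((\<lambda>n \<omega>. \<lambda>(i, r)\<in>{..<I n} \<times> {..<R}. A n i r \<omega>) n x)) {..<N}"
    proof (rule indep_vars_compose2[OF indep_mats])
      fix n assume "n \<in> {..<N}"
      then have "(idx n, r) \<in> {..<I n} \<times> {..<R}" "(idx n, s) \<in> {..<I n} \<times> {..<R}"
        using idxn rs by auto
      then show "(\<lambda>f::nat\<times>nat\<Rightarrow>real. f (idx n, r) * f (idx n, s)) \<in>
          borel_measurable (PiM ({..<I n} \<times> {..<R}) (\<lambda>_. borel))"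
        by (intro borel_measurable_times) (auto intro: measurable_component_singleton[where M="\<lambda>_. borel", simplified])
    qed
    then have ind: "indep_vars (\<lambda>_. borel) (\<lambda>n \<omega>. A n (idx n) r \<omega> * A n (idx n) s \<omega>) {..<N}"
      by (rule indep_vars_cong[THEN iffD1, rotated 3]) (auto simp: idxn rs)
    have ints: "\<And>n. n \<in> {..<N} \<Longrightarrow> integrable M (\<lambda>\<omega>. A n (idx n) r \<omega> * A n (idx n) s \<omega>)"
      using int2 idxn rs by auto
    show ?thesis
      using indep_vars_lebesgue_integral[OF _ ind ints] indep_vars_integrable[OF _ ind ints]
      by (simp add: G_def)
  qed
  have fin: "finite (tensor_idx N I)" by (simp add: tensor_idx_def finite_PiE)
  have expand: "frob_sq N I (kruskal N R (\<lambda>n i r. A n i r \<omega>)) =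
      (\<Sum>idx\<in>tensor_idx N I. \<Sum>r<R. \<Sum>s<R. \<Prod>n<N. A n (idx n) r \<omega> * A n (idx n) s \<omega>)" for \<omega>
    by (simp add: frob_sq_def kruskal_def power2_eq_square sum_product prod.distrib)
  have E: "(\<integral>\<omega>. frob_sq N I (kruskal N R (\<lambda>n i r. A n i r \<omega>)) \<partial>M)
      = (\<Sum>idx\<in>tensor_idx N I. \<Sum>r<R. \<Sum>s<R. \<Prod>n<N. G n (idx n) r s)"
    unfolding expand
  proof (subst Bochner_Integration.integral_sum, goal_cases)
    case 1 then show ?case using key by (auto intro!: Bochner_Integration.integrable_sum)
  next
    case 2 show ?case
    proof (rule sum.cong[OF refl], subst Bochner_Integration.integral_sum, goal_cases)
      case (1 idx) then show ?case using key by (auto intro!: Bochner_Integration.integrable_sum)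
    next
      case (2 idx) show ?case
      proof (rule sum.cong[OF refl], subst Bochner_Integration.integral_sum, goal_cases)
        case (1 r) then show ?case using key \<open>idx \<in> _\<close> by auto
      next
        case (2 r) then show ?case using key \<open>idx \<in> _\<close> by (auto intro!: sum.cong)
      qed
    qed
  qed
  have part1: "(\<Sum>idx\<in>tensor_idx N I. \<Sum>r<R. \<Sum>s<R. \<Prod>n<N. G n (idx n) r s)
      = (\<Sum>idx\<in>tensor_idx N I. gen_inner N R (\<lambda>n r s. G n (idx n) r s))"
    by (simp add: gen_inner_def)
  have "(\<Sum>idx\<in>tensor_idx N I. \<Sum>r<R. \<Sum>s<R. \<Prod>n<N. G n (idx n) r s)
      = (\<Sum>r<R. \<Sum>s<R. \<Prod>n<N. \<Sum>i<I n. G n i r s)"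
    by (simp add: tensor_idx_def prod_sum_PiE) (subst sum.swap, rule sum.cong[OF refl], rule sum.swap)
  also have "\<dots> = (\<Sum>k<R*R. \<Prod>n<N. \<Sum>i<I n. G n i (k mod R) (k div R))"
    by (subst divmod_sum) (rule sum.swap)
  also have "\<dots> = ones_form (\<Prod>n<N. I n) (R^2)
               (kr_prod I (\<lambda>n i. vec_mat R (\<lambda>r s. G n i r s)) N)"
    unfolding ones_form_def
    by (subst sum.swap) (simp add: kr_sum vec_mat_def power2_eq_square)
  finally show ?thesis using E part1 by (simp add: G_def)
qed

end
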